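(* Let $q\ge2$, $t\ge1$, $b\ge1$, $n\ge bt+1$. Then for every $\sigma\in\Sigma_q$, \[ |\mathcal{D}_{t,b}(\boldsymbol{X}^{\sigma}_{n,q,b})|=D_{q,b}(n,t)=\sum_{i=0}^{t}\binom{n-bt}{i}\,d_{q-1,1}(t,t-i). \] In particular, $D_{2,b}(n,t)=\sum_{i=0}^{t}\binom{n-bt}{i}$.
   Context: $\Sigma_q=\{0,\ldots,q-1\}$. A $b$-burst-deletion at position $i\in[1,n-b+1]$ transforms $x_1\cdots x_n$ into $x_1\cdots x_{i-1}x_{i+b}\cdots x_n$. For $n\ge tb+1$ (and $t\ge0$), $\mathcal{D}_{t,b}(\boldsymbol{x})$ is the set of all length-$(n-tb)$ sequences obtainable from $\boldsymbol{x}$ by $t$ successive $b$-burst-deletions ($\mathcal{D}_{0,b}(\boldsymbol{x})=\{\boldsymbol{x}\}$). $D_{q,b}(n,t)=\max\{|\mathcal{D}_{t,b}(\boldsymbol{x})|:\boldsymbol{x}\in\Sigma_q^n\}$. For an alphabet size $q'\ge1$, $\sigma\in\Sigma_{q'}$ and $m\ge1$, the $b$-cyclic sequence $\boldsymbol{X}^{\sigma}_{m,q',b}=X_1\cdots X_m$ has $X_i\equiv\sigma+\lfloor (i-1)/b\rfloor\pmod{q'}$ (for $q'=1$ this is $0^m$). For $m\ge bs+1$, $s\ge 0$, $d_{q',b}(m,s):=|\mathcal{D}_{s,b}(\boldsymbol{X}^{0}_{m,q',b})|$; also $d_{q',b}(m,s)=1$ if $m=bs\ge0$, and $d_{q',b}(m,s)=0$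 if $m<bs$ or $s<0$. In particular $d_{q-1,1}(t,t-i)$ is the number of distinct subsequences of length $i$ of the cyclic sequence $\boldsymbol{X}^0_{t,q-1,1}$ (and equals $1$ when $q=2$). Convention: $\binom{m}{i}=0$ if $m<i$. *)

theory Defs
  imports Main
begin

text \<open>Positions are 0-indexed: deleting the burst starting at 0-based position i
  (i + b \<le> length x) corresponds to the paper's position i+1.\<close>

definition burst_dels :: "nat \<Rightarrow> nat list \<Rightarrow> nat list set" where
  "burst_dels b x = {take i x @ drop (i + b) x | i. i + b \<le> length x}"

fun Dset :: "nat \<Rightarrow> nat \<Rightarrow> nat list \<Rightarrow> nat list set" where
  "Dset 0 b x = {x}"
| "Dset (Suc t) b x = (\<Union>y\<in>Dset t b x. burst_dels b y)"

definition Dmax :: "nat \<Rightarrow> nat \<Rightarrow> nat \<Rightarrow> nat \<Rightarrow> nat" where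
  "Dmax q b n t = Max {card (Dset t b x) | x. length x = n \<and> set x \<subseteq> {..<q}}"

definition cyclic_seq :: "nat \<Rightarrow> nat \<Rightarrow> nat \<Rightarrow> nat \<Rightarrow> nat list" where
  "cyclic_seq \<sigma> m q' b = map (\<lambda>i. (\<sigma> + i div b) mod q') [0..<m]"

definition dcyc :: "nat \<Rightarrow> nat \<Rightarrow> nat \<Rightarrow> nat \<Rightarrow> nat" where
  "dcyc q' b m s = (if b * s + 1 \<le> m then card (Dset s b (cyclic_seq 0 m q' b))
                    else if m = b * s then 1 else 0)"

end

theory Submission
  imports Defs
begin

fun emb :: "nat \<Rightarrow> nat list \<Rightarrow> nat list \<Rightarrow> bool" where
  "emb b x [] = (b dvd length x)"
| "emb b x (a # y) = (\<exists>k. b * k < length x \<and> x ! (b * k) = a \<and> emb b (drop (b * k + 1) x) y)"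

lemma emb_len: "emb b x y \<Longrightarrow> length y \<le> length x"
  by (induction y arbitrary: x) fastforce+

lemma emb_ex: "emb b x y \<Longrightarrow> \<exists>c. length x = length y + b * c"
proof (induction y arbitrary: x)
  case Nil
  then show ?case by auto
next
  case (Cons a y)
  then obtain k where k: "b * k < length x" "emb b (drop (b * k + 1) x) y" by auto
  with Cons.IH obtain c where "length (drop (b * k + 1) x) = length y + b * c" by blast
  with k have "length x = length (a # y) + b * (k + c)" by (simp add: algebra_simps)
  then show ?case by blast
qed

lemma emb_refl: "emb b x x"
proof (induction x)
  case Nil
  then show ?case by simp
next
  case (Cons a x)
  then show ?case by (auto intro!: exI[of _ 0])
qed

lemma emb_prefix: "emb b w z \<Longrightarrow> length u = b * c \<Longrightarrow> emb b (u @ w) z"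
proof (cases z)
  case Nil
  assume "emb b w z" "length u = b * c"
  then show ?thesis using Nil by auto
next
  case (Cons a z')
  assume "emb b w z" and u: "length u = b * c"
  then obtain k where k: "b * k < length w" "w ! (b * k) = a" "emb b (drop (b * k + 1) w) z'"
    using Cons by auto
  have 1: "b * (k + c) = length u + b * k" using u by (simp add: algebra_simps)
  have "(u @ w) ! (b * (k + c)) = a" using k 1 by (simp add: nth_append)
  moreover have "drop (b * (k + c) + 1) (u @ w) = drop (b * k + 1) w" using 1 by simp
  moreover have "b * (k + c) < length (u @ w)" using 1 k by simp
  ultimately show ?thesis using Cons k by auto
qed

lemma emb_append: "emb b u v \<Longrightarrow> emb b w y \<Longrightarrow> emb b (u @ w) (v @ y)"
proof (induction v arbitrary: u)
  case Nil
  then obtain c where "length u = b * c" by auto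
  then show ?case using emb_prefix Nil by auto
next
  case (Cons a v)
  then obtain k where k: "b * k < length u" "u ! (b * k) = a" "emb b (drop (b * k + 1) u) v"
    by auto
  have "emb b (drop (b * k + 1) u @ w) (v @ y)" using Cons k by blast
  moreover have "drop (b * k + 1) (u @ w) = drop (b * k + 1) u @ w" using k by simp
  moreover have "(u @ w) ! (b * k) = a" using k by (simp add: nth_append)
  moreover have "b * k < length (u @ w)" using k by simp
  ultimately have "b * k < length (u @ w) \<and> (u @ w) ! (b * k) = a \<and> emb b (drop (b * k + 1) (u @ w)) (v @ y)"
    by simp
  then show ?case unfolding append_Cons emb.simps by blast
qed

lemma emb_split: "emb b x (v @ y) \<Longrightarrow> \<exists>u w. x = u @ w \<and> emb b u v \<and> emb b w y"
proof (induction v arbitrary: x)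
  case Nil
  then show ?case by (intro exI[of _ "[]"] exI[of _ x]) auto
next
  case (Cons a v)
  then obtain k where k: "b * k < length x" "x ! (b * k) = a" "emb b (drop (b * k + 1) x) (v @ y)"
    by auto
  then obtain u' w where uw: "drop (b * k + 1) x = u' @ w" "emb b u' v" "emb b w y"
    using Cons.IH by blast
  define u where "u = take (b * k + 1) x @ u'"
  have "x = u @ w" unfolding u_def using uw(1) by (metis append.assoc append_take_drop_id)
  moreover have "emb b u (a # v)"
  proof -
    have "u ! (b * k) = a" using k unfolding u_def by (simp add: nth_append)
    moreover have "drop (b * k + 1) u = u'" using k unfolding u_def by simp
    moreover have "b * k < length u" using k unfolding u_def by simp
    ultimately show ?thesis using uw by auto
  qed
  ultimately show ?case using uw by blast
qed

lemma emb_burst: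
  assumes "emb b x y" "i + b \<le> length y"
  shows "emb b x (take i y @ drop (i + b) y)"
proof -
  have "y = take i y @ (take b (drop i y) @ drop (i + b) y)"
    by (metis add.commute append_take_drop_id drop_drop)
  then obtain u w where uw: "x = u @ w" "emb b u (take i y)" "emb b w (take b (drop i y) @ drop (i + b) y)"
    using emb_split assms(1) by metis
  then obtain u2 w2 where uw2: "w = u2 @ w2" "emb b u2 (take b (drop i y))" "emb b w2 (drop (i + b) y)"
    using emb_split by blast
  obtain c where "length u2 = length (take b (drop i y)) + b * c" using emb_ex uw2(2) by blast
  then have "length u2 = b * (Suc c)" using assms(2) by simp
  then have "emb b w (drop (i + b) y)" using uw2 emb_prefix by blast
  then show ?thesis using uw emb_append by blast
qed

lemma emb_cases:
  assumes "emb b x z" "length z < length x" "0 < b"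
  shows "(b \<le> length x \<and> emb b (drop b x) z) \<or> (\<exists>a x' z'. x = a # x' \<and> z = a # z' \<and> emb b x' z')"
proof (cases z)
  case Nil
  then obtain c where "length x = b * c" using assms by auto
  with assms Nil have "c \<ge> 1" by (cases c) auto
  then have "b \<le> length x" "length (drop b x) = b * (c - 1)" using \<open>length x = b * c\<close>
    by (auto simp: algebra_simps diff_mult_distrib2)
  then show ?thesis using Nil by auto
next
  case (Cons a z')
  then obtain k where k: "b * k < length x" "x ! (b * k) = a" "emb b (drop (b * k + 1) x) z'"
    using assms by auto
  show ?thesis
  proof (cases k)
    case 0
    then have "x = a # drop 1 x" using k by (cases x) auto
    then show ?thesis using k 0 Cons by auto
  next
    case (Suc k')
    have 1: "b * k = b + b * k'" using Suc by simp
    have "b \<le> length x" using k 1 by simp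
    moreover have "emb b (drop b x) z"
    proof -
      have "drop b x ! (b * k') = a" using k 1 by simp
      moreover have "drop (b * k' + 1) (drop b x) = drop (b * k + 1) x" using 1 by (simp add: add.commute add.left_commute)
      moreover have "b * k' < length (drop b x)" using k 1 by simp
      ultimately show ?thesis using Cons k by auto
    qed
    ultimately show ?thesis by blast
  qed
qed

lemma emb_unburst:
  assumes "emb b x z" "length x = length z + b * Suc t" "0 < b"
  shows "\<exists>y. emb b x y \<and> length x = length y + b * t \<and> z \<in> burst_dels b y"
  using assms
proof (induction z arbitrary: x)
  case Nil
  have c: "b \<le> length x \<and> emb b (drop b x) []"
    using emb_cases[OF Nil(1)] Nil by auto
  define y where "y = take b x"
  have "emb b (take b x @ drop b x) (take b x @ [])" using emb_append emb_refl c by blast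
  then have "emb b x y" unfolding y_def by simp
  moreover have "length x = length y + b * t" unfolding y_def using Nil c by simp
  moreover have "[] \<in> burst_dels b y" unfolding burst_dels_def y_def using c
    by (auto intro!: exI[of _ 0])
  ultimately show ?case by blast
next
  case (Cons a z)
  from emb_cases[OF Cons(2)] Cons(3,4)
  consider "b \<le> length x \<and> emb b (drop b x) (a # z)"
    | x' where "x = a # x'" "emb b x' z" by auto
  then show ?case
  proof cases
    case 1
    define y where "y = take b x @ a # z"
    have "emb b (take b x @ drop b x) y" unfolding y_def using emb_append emb_refl 1 by blast
    then have "emb b x y" by simp
    moreover have "length x = length y + b * t" unfolding y_def using Cons 1 by simp
    moreover have "a # z \<in> burst_dels b y" unfolding burst_dels_def y_def using 1
      by (auto intro!: exI[of _ 0])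
    ultimately show ?thesis by blast
  next
    case 2
    then obtain y' where y': "emb b x' y'" "length x' = length y' + b * t" "z \<in> burst_dels b y'"
      using Cons by auto
    then obtain i where i: "i + b \<le> length y'" "z = take i y' @ drop (i + b) y'"
      unfolding burst_dels_def by auto
    have "emb b x (a # y')" using 2 y' by (auto intro!: exI[of _ 0])
    moreover have "length x = length (a # y') + b * t" using 2 y' by simp
    moreover have "a # z \<in> burst_dels b (a # y')" unfolding burst_dels_def using i
      by (auto intro!: exI[of _ "Suc i"])
    ultimately show ?thesis by blast
  qed
qed

lemma emb_eq: "emb b x y \<Longrightarrow> length x = length y \<Longrightarrow> 0 < b \<Longrightarrow> x = y"
proof (induction y arbitrary: x)
  case Nil
  then show ?case by simp
next
  case (Cons a y)
  then obtain k where k: "b * k < length x" "x ! (b * k) = a" "emb b (drop (b * k + 1) x) y"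
    by auto
  have "length y \<le> length (drop (b * k + 1) x)" using emb_len k by blast
  then have "b * k = 0" using Cons(3) k(1) by (cases "b*k") auto
  then have "k = 0" using Cons(4) by simp
  then have "x = a # drop 1 x" using k by (cases x) auto
  moreover have "drop 1 x = y" using Cons k \<open>k = 0\<close> by simp
  ultimately show ?case by simp
qed

lemma Dset_emb: "0 < b \<Longrightarrow> Dset t b x = {y. emb b x y \<and> length x = length y + b * t}"
proof (induction t)
  case 0
  then show ?case using emb_eq emb_refl by auto
next
  case (Suc t)
  show ?case
  proof (intro set_eqI iffI)
    fix z assume "z \<in> Dset (Suc t) b x"
    then obtain y where "y \<in> Dset t b x" "z \<in> burst_dels b y" by auto
    then obtain i where y: "emb b x y" "length x = length y + b * t" "i + b \<le> length y"
      "z = take i y @ drop (i + b) y"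
      using Suc unfolding burst_dels_def by auto
    then show "z \<in> {y. emb b x y \<and> length x = length y + b * Suc t}"
      using emb_burst by auto
  next
    fix z assume "z \<in> {y. emb b x y \<and> length x = length y + b * Suc t}"
    then obtain y where "emb b x y \<and> length x = length y + b * t \<and> z \<in> burst_dels b y"
      using emb_unburst Suc by blast
    then show "z \<in> Dset (Suc t) b x" using Suc by auto
  qed
qed

lemma finite_Dset: "finite (Dset t b x)"
proof (induction t)
  case 0
  then show ?case by simp
next
  case (Suc t)
  have 1: "burst_dels b y = (\<lambda>i. take i y @ drop (i + b) y) ` {i. i + b \<le> length y}" for y
    unfolding burst_dels_def by auto
  have 2: "finite {i. i + b \<le> length y}" for y by (rule finite_subset[of _ "{..length y}"]) auto
  have "finite (burst_dels b y)" for y unfolding 1 using 2 by (rule finite_imageI)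
  then show ?case using Suc by simp
qed


fun cnt :: "nat \<Rightarrow> nat \<Rightarrow> nat \<Rightarrow> nat" where
  "cnt q 0 t = 1"
| "cnt q (Suc m) t = (\<Sum>a<q. if a \<le> t then cnt q m (t - a) else 0)"

lemma cnt_mono: "s \<le> t \<Longrightarrow> cnt q m s \<le> cnt q m t"
proof (induction m arbitrary: s t)
  case 0
  then show ?case by simp
next
  case (Suc m)
  show ?case unfolding cnt.simps
    by (rule sum_mono) (use Suc in auto)
qed

lemma cnt_alt: "cnt q (Suc m) t = (\<Sum>a\<in>{a\<in>{..<q}. a \<le> t}. cnt q m (t - a))"
  by (simp only: cnt.simps sum.inter_filter[OF finite_lessThan])

lemma cnt_one: "cnt (Suc 0) m t = 1"
  by (induction m arbitrary: t) auto

lemma sum_filter_eq: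
  fixes a t :: nat
  assumes "1 \<le> a"
  shows "(if a \<le> t then (\<Sum>i=0..t-a. g i) else 0) = (\<Sum>j<t. if a + j \<le> t then g j else (0::nat))"
proof (cases "a \<le> t")
  case True
  have "{j\<in>{..<t}. a + j \<le> t} = {0..t-a}" using assms True by auto
  then have "(\<Sum>j<t. if a + j \<le> t then g j else 0) = (\<Sum>i=0..t-a. g i)"
    by (metis (no_types) finite_lessThan sum.inter_filter)
  then show ?thesis using True by simp
next
  case False
  then show ?thesis by (auto intro!: sum.neutral)
qed

lemma reidx:
  fixes q t j :: nat
  assumes "1 \<le> q" "j < t"
  shows "(\<Sum>a'<q-1. if a' \<le> t - Suc j then g (t - Suc j - a') else 0) =
         (\<Sum>a\<in>{1..<q}. if a + j \<le> t then g (t - a - j) else (0::nat))"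
proof -
  have s: "Suc ` {..<q-1} = {1..<q}" using assms
    using assms by (simp add: image_Suc_lessThan atLeastLessThanSuc_atLeastAtMost[symmetric])
  have "(\<Sum>a\<in>Suc ` {..<q-1}. if a + j \<le> t then g (t - a - j) else (0::nat))
     = (\<Sum>a'<q-1. if Suc a' + j \<le> t then g (t - Suc a' - j) else 0)"
    unfolding sum.reindex[OF inj_Suc[THEN inj_on_subset, OF subset_UNIV]] comp_def ..
  also have "\<dots> = (\<Sum>a'<q-1. if a' \<le> t - Suc j then g (t - Suc j - a') else 0)"
  proof (rule sum.cong[OF refl])
    fix a' assume "a' \<in> {..<q-1}"
    have e1: "(a' \<le> t - Suc j) = (Suc a' + j \<le> t)" using assms by auto
    have e2: "t - Suc j - a' = t - Suc a' - j" by simp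
    show "(if Suc a' + j \<le> t then g (t - Suc a' - j) else 0) = (if a' \<le> t - Suc j then g (t - Suc j - a') else 0)"
      by (simp only: e1 e2)
  qed
  finally show ?thesis unfolding s by (rule sym)
qed

lemma cnt_identity:
  assumes "1 \<le> q"
  shows "cnt q m t = (\<Sum>i=0..t. (m choose i) * cnt (q - 1) i (t - i))"
proof (induction m arbitrary: t)
  case 0
  have "(\<Sum>i=0..t. (0 choose i) * cnt (q - 1) i (t - i)) = (\<Sum>i\<in>{0}. (0 choose i) * cnt (q - 1) i (t - i))"
    by (rule sum.mono_neutral_right) auto
  then show ?case by simp
next
  case (Suc m)
  define c' where "c' = cnt (q - 1)"
  define S0 where "S0 = (\<Sum>i=0..t. (m choose i) * c' i (t - i))"
  define S1 where "S1 = (\<Sum>a\<in>{1..<q}. \<Sum>j<t. if a + j \<le> t then (m choose j) * c' j (t - a - j) else 0)"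
  have q: "{..<q} = insert 0 {1..<q}" using assms by auto
  have L: "cnt q (Suc m) t = S0 + S1"
  proof -
    have "cnt q (Suc m) t = cnt q m t + (\<Sum>a\<in>{1..<q}. if a \<le> t then cnt q m (t - a) else 0)"
      by (simp add: q)
    also have "cnt q m t = S0" unfolding S0_def c'_def by (rule Suc.IH)
    also have "(\<Sum>a\<in>{1..<q}. if a \<le> t then cnt q m (t - a) else 0) = S1"
      unfolding S1_def
    proof (rule sum.cong)
      fix a assume "a \<in> {1..<q}"
      then have "1 \<le> a" by simp
      have "(if a \<le> t then cnt q m (t - a) else 0)
          = (if a \<le> t then (\<Sum>i=0..t-a. (m choose i) * c' i (t - a - i)) else 0)"
        using Suc.IH unfolding c'_def by simp
      also have "\<dots> = (\<Sum>j<t. if a + j \<le> t then (m choose j) * c' j (t - a - j) else 0)"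
        by (rule sum_filter_eq[OF \<open>1 \<le> a\<close>])
      finally show "(if a \<le> t then cnt q m (t - a) else 0) = (\<Sum>j<t. if a + j \<le> t then (m choose j) * c' j (t - a - j) else 0)" .
    qed simp
    finally show ?thesis .
  qed
  have R: "(\<Sum>i=0..t. (Suc m choose i) * c' i (t - i)) = S0 + S1"
  proof -
    have bin: "(Suc m choose i) = (m choose i) + (if i = 0 then 0 else m choose (i - 1))" for i
      by (cases i) auto
    have "(\<Sum>i=0..t. (Suc m choose i) * c' i (t - i))
        = S0 + (\<Sum>i=0..t. (if i = 0 then 0 else m choose (i - 1)) * c' i (t - i))"
      unfolding S0_def bin by (simp add: algebra_simps sum.distrib)
    also have "(\<Sum>i=0..t. (if i = 0 then 0 else m choose (i - 1)) * c' i (t - i))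
             = (\<Sum>j<t. (m choose j) * c' (Suc j) (t - Suc j))"
    proof (cases t)
      case 0
      then show ?thesis by simp
    next
      case (Suc t')
      show ?thesis unfolding Suc sum.atLeast0_atMost_Suc_shift
        by (simp add: atLeast0AtMost lessThan_Suc_atMost)
    qed
    also have "\<dots> = (\<Sum>j<t. \<Sum>a\<in>{1..<q}. if a + j \<le> t then (m choose j) * c' j (t - a - j) else 0)"
    proof (rule sum.cong)
      fix j assume j: "j \<in> {..<t}"
      have "(m choose j) * c' (Suc j) (t - Suc j)
          = (\<Sum>a'<q-1. if a' \<le> t - Suc j then (m choose j) * c' j (t - Suc j - a') else 0)"
        unfolding c'_def cnt.simps sum_distrib_left by (rule sum.cong) auto
      also have "\<dots> = (\<Sum>a\<in>{1..<q}. if a + j \<le> t then (m choose j) * c' j (t - a - j) else 0)"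
        using reidx[OF assms, of j t "\<lambda>s. (m choose j) * c' j s"] j by simp
      finally show "(m choose j) * c' (Suc j) (t - Suc j)
          = (\<Sum>a\<in>{1..<q}. if a + j \<le> t then (m choose j) * c' j (t - a - j) else 0)" .
    qed simp
    also have "\<dots> = S1" unfolding S1_def by (rule sum.swap)
    finally show ?thesis .
  qed
  show ?case using L R unfolding c'_def by simp
qed


definition kf :: "nat list \<Rightarrow> nat \<Rightarrow> nat \<Rightarrow> nat \<Rightarrow> nat" where
  "kf x b t a = (LEAST k. k \<le> t \<and> x ! (b * k) = a)"

lemma kf_props:
  assumes "a \<in> (\<lambda>k. x ! (b * k)) ` {..t}"
  shows "kf x b t a \<le> t" "x ! (b * kf x b t a) = a" "\<And>j. j < kf x b t a \<Longrightarrow> x ! (b * j) \<noteq> a"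
proof -
  from assms obtain k where k: "k \<le> t \<and> x ! (b * k) = a" by auto
  then have "kf x b t a \<le> t \<and> x ! (b * kf x b t a) = a" unfolding kf_def by (rule LeastI)
  then show "kf x b t a \<le> t" "x ! (b * kf x b t a) = a" by auto
  fix j assume "j < kf x b t a"
  then have "\<not> (j \<le> t \<and> x ! (b * j) = a)" unfolding kf_def by (rule not_less_Least)
  then show "x ! (b * j) \<noteq> a" using \<open>j < kf x b t a\<close> \<open>kf x b t a \<le> t\<close> by auto
qed

lemma kf_le:
  "k \<le> t \<Longrightarrow> x ! (b * k) = a \<Longrightarrow> kf x b t a \<le> k"
  unfolding kf_def by (rule Least_le) simp

lemma Dset_nil:
  assumes b: "0 < b" and len: "length x = b * t"
  shows "Dset t b x = {[]}"
proof -
  have "[] \<in> Dset t b x" using Dset_emb[OF b] len by simp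
  moreover have "y = []" if "y \<in> Dset t b x" for y using that Dset_emb[OF b] len by simp
  ultimately show ?thesis by blast
qed

lemma Dset_Cons:
  assumes b: "0 < b" and len: "length x = Suc m + b * t"
  shows "Dset t b x = (\<Union>a\<in>(\<lambda>k. x ! (b * k)) ` {..t}.
            (#) a ` Dset (t - kf x b t a) b (drop (b * kf x b t a + 1) x))"
proof (intro set_eqI iffI)
  fix z assume "z \<in> Dset t b x"
  then have z: "emb b x z" "length x = length z + b * t" using Dset_emb[OF b] by auto
  then obtain a y where zy: "z = a # y" using len by (cases z) auto
  then obtain k where k: "b * k < length x" "x ! (b * k) = a" "emb b (drop (b * k + 1) x) y"
    using z by auto
  have "length y \<le> length (drop (b * k + 1) x)" using emb_len k by blast
  then have "length y \<le> length y + b * t - b * k" using z zy k(1) by simp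
  moreover have "b * k < Suc (length y + b * t)" using k(1) z zy by simp
  ultimately have "b * k \<le> b * t" by arith
  then have kt: "k \<le> t" using b by simp
  then have aA: "a \<in> (\<lambda>k. x ! (b * k)) ` {..t}" using k by auto
  define k0 where "k0 = kf x b t a"
  have k0: "k0 \<le> k" "k0 \<le> t" "x ! (b * k0) = a"
    using kf_le[OF kt k(2)] kf_props[OF aA] unfolding k0_def by auto
  have bk: "b * k0 \<le> b * k" using k0 by simp
  have "drop (b * k0 + 1) x = take (b * k - b * k0) (drop (b * k0 + 1) x) @ drop (b * k + 1) x"
  proof -
    have d: "b * k - b * k0 + (b * k0 + 1) = b * k + 1" using bk by simp
    have "drop (b * k - b * k0) (drop (b * k0 + 1) x) = drop (b * k + 1) x"
      by (simp only: drop_drop d)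
    then show ?thesis by (metis append_take_drop_id)
  qed
  moreover have "length (take (b * k - b * k0) (drop (b * k0 + 1) x)) = b * (k - k0)"
    using k(1) bk by (simp add: diff_mult_distrib2)
  ultimately have "emb b (drop (b * k0 + 1) x) y" using emb_prefix k(3) by metis
  moreover have "length (drop (b * k0 + 1) x) = length y + b * (t - k0)"
    using z zy k0 by (simp add: diff_mult_distrib2)
  ultimately have "y \<in> Dset (t - k0) b (drop (b * k0 + 1) x)" using Dset_emb[OF b] by auto
  then show "z \<in> (\<Union>a\<in>(\<lambda>k. x ! (b * k)) ` {..t}.
            (#) a ` Dset (t - kf x b t a) b (drop (b * kf x b t a + 1) x))"
    using aA zy unfolding k0_def by blast
next
  fix z assume "z \<in> (\<Union>a\<in>(\<lambda>k. x ! (b * k)) ` {..t}.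
            (#) a ` Dset (t - kf x b t a) b (drop (b * kf x b t a + 1) x))"
  then obtain a y where aA: "a \<in> (\<lambda>k. x ! (b * k)) ` {..t}" and zy: "z = a # y"
    and y: "y \<in> Dset (t - kf x b t a) b (drop (b * kf x b t a + 1) x)" by auto
  define k0 where "k0 = kf x b t a"
  have k0: "k0 \<le> t" "x ! (b * k0) = a" using kf_props[OF aA] unfolding k0_def by auto
  have y': "emb b (drop (b * k0 + 1) x) y" "length (drop (b * k0 + 1) x) = length y + b * (t - k0)"
    using y Dset_emb[OF b] unfolding k0_def by auto
  have "b * k0 \<le> b * t" using k0 by (simp add: mult_le_mono2)
  then have bk: "b * k0 < length x" using len by linarith
  then have "emb b x z" using zy k0 y' by auto
  moreover have "length x = length z + b * t"
  proof -
    have "length x - Suc (b * k0) = length y + (b * t - b * k0)" using y'(2) by (simp add: diff_mult_distrib2)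
    moreover have "length z = Suc (length y)" using zy by simp
    ultimately show ?thesis using bk \<open>b * k0 \<le> b * t\<close> by arith
  qed
  ultimately show "z \<in> Dset t b x" using Dset_emb[OF b] by auto
qed


lemma card_Dset_Cons:
  assumes b: "0 < b" and len: "length x = Suc m + b * t"
  shows "card (Dset t b x) = (\<Sum>a\<in>(\<lambda>k. x ! (b * k)) ` {..t}.
            card (Dset (t - kf x b t a) b (drop (b * kf x b t a + 1) x)))"
proof -
  have "card (Dset t b x) = (\<Sum>a\<in>(\<lambda>k. x ! (b * k)) ` {..t}.
            card ((#) a ` Dset (t - kf x b t a) b (drop (b * kf x b t a + 1) x)))"
    unfolding Dset_Cons[OF assms]
    by (rule card_UN_disjoint) (auto simp: finite_Dset)
  also have "\<dots> = (\<Sum>a\<in>(\<lambda>k. x ! (b * k)) ` {..t}.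
            card (Dset (t - kf x b t a) b (drop (b * kf x b t a + 1) x)))"
    by (rule sum.cong) (auto intro!: card_image simp: inj_on_def)
  finally show ?thesis .
qed



definition ecode :: "nat list \<Rightarrow> nat \<Rightarrow> nat \<Rightarrow> nat \<Rightarrow> nat" where
  "ecode x b t a = card ((\<lambda>j. x ! (b * j)) ` {..<kf x b t a})"

lemma ecode_le: "ecode x b t a \<le> kf x b t a"
  unfolding ecode_def using card_image_le[of "{..<kf x b t a}" "\<lambda>j. x ! (b * j)"] by simp

lemma ecode_less:
  assumes b: "0 < b" and len: "b * t < length x" and q: "set x \<subseteq> {..<q}"
    and aA: "a \<in> (\<lambda>k. x ! (b * k)) ` {..t}"
  shows "ecode x b t a < q"
proof -
  note kp = kf_props[OF aA]
  have "b * kf x b t a \<le> b * t" using kp(1) by (simp add: mult_le_mono2)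
  then have "b * kf x b t a < length x" using len by linarith
  then have "a < q" using kp(2) q by (metis lessThan_iff nth_mem subsetD)
  have sub: "(\<lambda>j. x ! (b * j)) ` {..<kf x b t a} \<subseteq> {..<q} - {a}"
  proof
    fix v assume "v \<in> (\<lambda>j. x ! (b * j)) ` {..<kf x b t a}"
    then obtain j where j: "j < kf x b t a" "v = x ! (b * j)" by auto
    have "b * j < b * kf x b t a" using j b by simp
    then have "b * j < length x" using \<open>b * kf x b t a < length x\<close> by linarith
    then have "v < q" using j q by (metis lessThan_iff nth_mem subsetD)
    moreover have "v \<noteq> a" using kp(3)[OF j(1)] j by simp
    ultimately show "v \<in> {..<q} - {a}" by simp
  qed
  have "ecode x b t a \<le> card ({..<q} - {a})" unfolding ecode_def
    by (rule card_mono[OF _ sub]) simp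
  also have "\<dots> = q - 1" using \<open>a < q\<close> by simp
  finally show ?thesis using \<open>a < q\<close> by linarith
qed

lemma ecode_mono:
  assumes a1: "a1 \<in> (\<lambda>k. x ! (b * k)) ` {..t}" and a2: "a2 \<in> (\<lambda>k. x ! (b * k)) ` {..t}"
    and lt: "kf x b t a1 < kf x b t a2"
  shows "ecode x b t a1 < ecode x b t a2"
proof -
  let ?f = "\<lambda>j. x ! (b * j)"
  have "?f ` {..<kf x b t a1} \<subset> ?f ` {..<kf x b t a2}"
  proof
    show "?f ` {..<kf x b t a1} \<subseteq> ?f ` {..<kf x b t a2}" using lt by auto
    have "a1 \<in> ?f ` {..<kf x b t a2}" using lt kf_props(2)[OF a1] by (auto intro!: image_eqI[of _ _ "kf x b t a1"])
    moreover have "a1 \<notin> ?f ` {..<kf x b t a1}" using kf_props(3)[OF a1] by auto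
    ultimately show "?f ` {..<kf x b t a1} \<noteq> ?f ` {..<kf x b t a2}" by blast
  qed
  then show ?thesis unfolding ecode_def by (rule psubset_card_mono[rotated]) simp
qed

lemma ecode_inj:
  "inj_on (ecode x b t) ((\<lambda>k. x ! (b * k)) ` {..t})"
proof (rule inj_onI)
  fix a1 a2 assume a1: "a1 \<in> (\<lambda>k. x ! (b * k)) ` {..t}" and a2: "a2 \<in> (\<lambda>k. x ! (b * k)) ` {..t}"
    and e: "ecode x b t a1 = ecode x b t a2"
  show "a1 = a2"
  proof (cases "kf x b t a1" "kf x b t a2" rule: linorder_cases)
    case less
    then show ?thesis using ecode_mono[OF a1 a2] e by simp
  next
    case equal
    then show ?thesis using kf_props(2)[OF a1] kf_props(2)[OF a2] by metis
  next
    case greater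
    then show ?thesis using ecode_mono[OF a2 a1] e by simp
  qed
qed

lemma Dset_upper:
  assumes b: "0 < b"
  shows "set x \<subseteq> {..<q} \<Longrightarrow> length x = m + b * t \<Longrightarrow> card (Dset t b x) \<le> cnt q m t"
proof (induction m arbitrary: x t)
  case 0
  then show ?case using Dset_nil[OF b] by simp
next
  case (Suc m)
  let ?A = "(\<lambda>k. x ! (b * k)) ` {..t}"
  let ?k = "kf x b t"
  let ?e = "ecode x b t"
  have "card (Dset t b x) = (\<Sum>a\<in>?A. card (Dset (t - ?k a) b (drop (b * ?k a + 1) x)))"
    by (rule card_Dset_Cons[OF b Suc.prems(2)])
  also have "\<dots> \<le> (\<Sum>a\<in>?A. cnt q m (t - ?k a))"
  proof (rule sum_mono)
    fix a assume aA: "a \<in> ?A"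
    have kt: "?k a \<le> t" using kf_props(1)[OF aA] .
    have "set (drop (b * ?k a + 1) x) \<subseteq> {..<q}" using Suc.prems(1) set_drop_subset by fastforce
    moreover have "length (drop (b * ?k a + 1) x) = m + b * (t - ?k a)"
      using Suc.prems(2) kt by (simp add: diff_mult_distrib2)
    ultimately show "card (Dset (t - ?k a) b (drop (b * ?k a + 1) x)) \<le> cnt q m (t - ?k a)"
      by (rule Suc.IH)
  qed
  also have "\<dots> \<le> (\<Sum>a\<in>?A. cnt q m (t - ?e a))"
    by (rule sum_mono, rule cnt_mono) (use ecode_le in \<open>simp add: diff_le_mono2\<close>)
  also have "\<dots> = (\<Sum>j\<in>?e ` ?A. cnt q m (t - j))"
    by (rule sum.reindex[OF ecode_inj, symmetric, unfolded comp_def])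
  also have "\<dots> \<le> (\<Sum>j\<in>{j\<in>{..<q}. j \<le> t}. cnt q m (t - j))"
  proof (rule sum_mono2)
    show "?e ` ?A \<subseteq> {j\<in>{..<q}. j \<le> t}"
    proof
      fix j assume "j \<in> ?e ` ?A"
      then obtain a where aA: "a \<in> ?A" and j: "j = ?e a" by auto
      have "b * t < length x" using Suc.prems(2) by simp
      then have "j < q" using ecode_less[OF b _ Suc.prems(1) aA] j by simp
      moreover have "j \<le> t" using ecode_le[of x b t a] kf_props(1)[OF aA] j by simp
      ultimately show "j \<in> {j\<in>{..<q}. j \<le> t}" by simp
    qed
  qed simp_all
  also have "\<dots> = cnt q (Suc m) t" by (rule cnt_alt[symmetric])
  finally show ?case .
qed


definition Gs :: "nat \<Rightarrow> nat \<Rightarrow> nat \<Rightarrow> nat \<Rightarrow> nat list" where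
  "Gs q b off m = map (\<lambda>i. ((i + off) div b) mod q) [0..<m]"

lemma Gs_len [simp]: "length (Gs q b off m) = m"
  unfolding Gs_def by simp

lemma Gs_nth: "i < m \<Longrightarrow> Gs q b off m ! i = ((i + off) div b) mod q"
  unfolding Gs_def by simp

lemma Gs_drop: "drop j (Gs q b off m) = Gs q b (off + j) (m - j)"
  by (rule nth_equalityI) (auto simp: Gs_nth ac_simps)

lemma Gs_set: "0 < q \<Longrightarrow> set (Gs q b off m) \<subseteq> {..<q}"
  unfolding Gs_def by auto

lemma cyclic_Gs: "0 < b \<Longrightarrow> cyclic_seq \<sigma> m q b = Gs q b (\<sigma> * b) m"
  unfolding cyclic_seq_def Gs_def by (auto simp: add.commute)

lemma mod_inj_aux:
  fixes c j k q :: nat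
  assumes "j < k" "k < q" "(c + j) mod q = (c + k) mod q"
  shows False
proof -
  have "q dvd (c + k) - (c + j)" using assms mod_eq_dvd_iff_nat[of "c + j" "c + k" q] by simp
  then have "q dvd k - j" by simp
  moreover have "0 < k - j" "k - j < q" using assms by auto
  ultimately show False using dvd_imp_le by fastforce
qed

lemma Dset_Gs:
  assumes b: "0 < b" and q: "0 < q"
  shows "card (Dset t b (Gs q b off (m + b * t))) = cnt q m t"
proof (induction m arbitrary: off t)
  case 0
  then show ?case using Dset_nil[OF b] by simp
next
  case (Suc m)
  define x where "x = Gs q b off (Suc m + b * t)"
  define f where "f k = (off div b + k) mod q" for k
  define K where "K = {k\<in>{..<q}. k \<le> t}"
  have len: "length x = Suc m + b * t" unfolding x_def by simp
  have xk: "x ! (b * k) = f k" if "k \<le> t" for k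
  proof -
    have "b * k \<le> b * t" using that by (simp add: mult_le_mono2)
    then have "b * k < Suc m + b * t" by linarith
    then show ?thesis unfolding x_def f_def using b by (simp add: Gs_nth add.commute)
  qed
  have finj: "inj_on f K"
  proof (rule inj_onI)
    fix j k assume "j \<in> K" "k \<in> K" "f j = f k"
    then show "j = k" unfolding K_def f_def using mod_inj_aux
      by (metis linorder_neqE_nat mem_Collect_eq lessThan_iff)
  qed
  have A: "(\<lambda>k. x ! (b * k)) ` {..t} = f ` K"
  proof (intro set_eqI iffI)
    fix a assume "a \<in> (\<lambda>k. x ! (b * k)) ` {..t}"
    then obtain k where k: "k \<le> t" "a = x ! (b * k)" by auto
    have "a = f (k mod q)" using k xk unfolding f_def by (simp add: mod_add_right_eq)
    moreover have "k mod q \<in> K"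
    proof -
      have "k mod q \<le> k" by (rule mod_less_eq_dividend)
      then have "k mod q \<le> t" using k(1) by linarith
      moreover have "k mod q < q" using q by simp
      ultimately show ?thesis unfolding K_def by simp
    qed
    ultimately show "a \<in> f ` K" by blast
  next
    fix a assume "a \<in> f ` K"
    then obtain k where "k \<in> K" "a = f k" by auto
    then show "a \<in> (\<lambda>k. x ! (b * k)) ` {..t}" using xk unfolding K_def by auto
  qed
  have kf: "kf x b t (f k) = k" if kK: "k \<in> K" for k
  proof -
    have kt: "k \<le> t" using kK unfolding K_def by simp
    have aA: "f k \<in> (\<lambda>k. x ! (b * k)) ` {..t}" using A kK by blast
    have le: "kf x b t (f k) \<le> k" using kf_le[OF kt xk[OF kt]] by simp
    have "f (kf x b t (f k)) = f k" using kf_props(1,2)[OF aA] xk by metis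
    moreover have "kf x b t (f k) \<in> K" using le kK unfolding K_def by auto
    ultimately show ?thesis using finj kK by (meson inj_onD)
  qed
  have "card (Dset t b x) = (\<Sum>a\<in>f ` K. card (Dset (t - kf x b t a) b (drop (b * kf x b t a + 1) x)))"
    using card_Dset_Cons[OF b len] A by simp
  also have "\<dots> = (\<Sum>k\<in>K. card (Dset (t - k) b (drop (b * k + 1) x)))"
    by (subst sum.reindex[OF finj]) (auto simp: kf intro!: sum.cong)
  also have "\<dots> = (\<Sum>k\<in>K. cnt q m (t - k))"
  proof (rule sum.cong[OF refl])
    fix k assume "k \<in> K"
    then have kt: "k \<le> t" unfolding K_def by simp
    have "Suc m + b * t - (b * k + 1) = m + b * (t - k)" using kt by (simp add: diff_mult_distrib2)
    then have "drop (b * k + 1) x = Gs q b (off + (b * k + 1)) (m + b * (t - k))"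
      unfolding x_def Gs_drop by simp
    then show "card (Dset (t - k) b (drop (b * k + 1) x)) = cnt q m (t - k)" using Suc.IH by simp
  qed
  also have "\<dots> = cnt q (Suc m) t" unfolding K_def by (rule cnt_alt[symmetric])
  finally show ?case unfolding x_def .
qed


lemma card_cyc:
  assumes b: "0 < b" and q: "0 < q" and n: "b * t \<le> n"
  shows "card (Dset t b (cyclic_seq \<sigma> n q b)) = cnt q (n - b * t) t"
proof -
  have "n = (n - b * t) + b * t" using n by simp
  then have "cyclic_seq \<sigma> n q b = Gs q b (\<sigma> * b) ((n - b * t) + b * t)"
    using cyclic_Gs[OF b] by metis
  then show ?thesis using Dset_Gs[OF b q] by simp
qed

lemma Dmax_eq:
  assumes b: "0 < b" and q: "0 < q" and n: "b * t \<le> n"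
  shows "Dmax q b n t = cnt q (n - b * t) t"
proof -
  let ?S = "{card (Dset t b x) | x. length x = n \<and> set x \<subseteq> {..<q}}"
  let ?c = "cnt q (n - b * t) t"
  have le: "s \<le> ?c" if "s \<in> ?S" for s
  proof -
    from that obtain x where x: "s = card (Dset t b x)" "length x = n" "set x \<subseteq> {..<q}" by auto
    have "length x = (n - b * t) + b * t" using x n by simp
    then show ?thesis using Dset_upper[OF b x(3)] x by simp
  qed
  have mem: "?c \<in> ?S"
  proof -
    have "cyclic_seq 0 n q b = Gs q b (0 * b) n" using cyclic_Gs[OF b] by metis
    then have "set (cyclic_seq 0 n q b) \<subseteq> {..<q}" using Gs_set[OF q] by simp
    moreover have "length (cyclic_seq 0 n q b) = n" unfolding cyclic_seq_def by simp
    ultimately show ?thesis using card_cyc[OF b q n, of 0] by (metis (mono_tags, lifting) mem_Collect_eq)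
  qed
  have fin: "finite ?S" by (rule finite_subset[of _ "{..?c}"]) (use le in auto)
  show ?thesis unfolding Dmax_def by (rule Max_eqI[OF fin le mem])
qed

lemma dcyc_cnt:
  assumes q: "2 \<le> q" and i: "i \<le> t"
  shows "dcyc (q - 1) 1 t (t - i) = cnt (q - 1) i (t - i)"
proof (cases "i = 0")
  case True
  then show ?thesis unfolding dcyc_def by simp
next
  case False
  then have "1 * (t - i) + 1 \<le> t" using i by simp
  moreover have "card (Dset (t - i) 1 (cyclic_seq 0 t (q - 1) 1)) = cnt (q - 1) (t - 1 * (t - i)) (t - i)"
    by (rule card_cyc) (use q in auto)
  moreover have "t - 1 * (t - i) = i" using i by simp
  ultimately show ?thesis unfolding dcyc_def by simp
qed

theorem theorem4p6:
  fixes q t b n \<sigma> :: nat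
  assumes "q \<ge> 2" and "t \<ge> 1" and "b \<ge> 1" and "n \<ge> b * t + 1" and "\<sigma> < q"
  shows "card (Dset t b (cyclic_seq \<sigma> n q b)) = Dmax q b n t
       \<and> Dmax q b n t = (\<Sum>i=0..t. (n - b * t choose i) * dcyc (q - 1) 1 t (t - i))
       \<and> Dmax 2 b n t = (\<Sum>i=0..t. n - b * t choose i)"
proof -
  have b: "0 < b" and q: "0 < q" and n: "b * t \<le> n" using assms by auto
  have D: "Dmax q b n t = cnt q (n - b * t) t" by (rule Dmax_eq[OF b q n])
  have 1: "card (Dset t b (cyclic_seq \<sigma> n q b)) = Dmax q b n t"
    using card_cyc[OF b q n] D by simp
  have "cnt q (n - b * t) t = (\<Sum>i=0..t. (n - b * t choose i) * cnt (q - 1) i (t - i))"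
    by (rule cnt_identity) (use assms in simp)
  also have "\<dots> = (\<Sum>i=0..t. (n - b * t choose i) * dcyc (q - 1) 1 t (t - i))"
    by (rule sum.cong) (use dcyc_cnt[OF assms(1)] in auto)
  finally have 2: "Dmax q b n t = (\<Sum>i=0..t. (n - b * t choose i) * dcyc (q - 1) 1 t (t - i))"
    using D by simp
  have "Dmax 2 b n t = cnt 2 (n - b * t) t" by (rule Dmax_eq[OF b _ n]) simp
  also have "\<dots> = (\<Sum>i=0..t. (n - b * t choose i) * cnt (2 - 1) i (t - i))"
    by (rule cnt_identity) simp
  also have "\<dots> = (\<Sum>i=0..t. n - b * t choose i)"
    using cnt_one by simp
  finally have 3: "Dmax 2 b n t = (\<Sum>i=0..t. n - b * t choose i)" .
  show ?thesis using 1 2 3 by blast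
qed


end
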